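(* Let $F$ be a finite field of characteristic $3$. Let $k\ge 0$ be an integer, $m=3k+1$, and $t$ an integer with $t^3\equiv 1\pmod m$ and $\gcd(m,t-1)=1$. Let $G=T_{3m}=\langle x,y\mid x^m=y^3=1,\ y^{-1}xy=x^t\rangle$ (of order $3m$) and $FG$ its group algebra. Let $s\in FG$ be the sum of all elements of $G$ whose order is a power of $3$ (including the identity), and let $\mathrm{Anh}(s)=\{\alpha\in FG\mid \alpha s=s\alpha=0\}$. Then $\mathrm{Anh}(s)\subseteq J(FG)$.
   Context: $J(FG)$ denotes the Jacobson radical of $FG$. *)

theory Defs
  imports "HOL-Algebra.Algebra" "HOL-Number_Theory.Cong"
begin

text \<open>The metacyclic group T_{3m} = < x, y | x^m = y^3 = 1, y^-1 x y = x^t >,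
  realised concretely: the pair (a,b) with 0 \<le> a < m, 0 \<le> b < 3 stands for x^a y^b.
  Since y^b x^c = x^(c t^(2b)) y^b (using t^3 = 1 mod m), the product is
  (x^a y^b)(x^c y^d) = x^(a + c t^(2b)) y^(b+d).\<close>
definition T_mult :: "nat \<Rightarrow> int \<Rightarrow> nat \<times> nat \<Rightarrow> nat \<times> nat \<Rightarrow> nat \<times> nat" where
  "T_mult m t p q = (nat ((int (fst p) + int (fst q) * t ^ (2 * snd p)) mod int m),
                     (snd p + snd q) mod 3)"

definition T_group :: "nat \<Rightarrow> int \<Rightarrow> (nat \<times> nat) monoid" where
  "T_group m t = \<lparr> carrier = {0..<m} \<times> {0..<3}, monoid.mult = T_mult m t, monoid.one = (0, 0) \<rparr>"

definition group_algebra :: "('g, 'm) monoid_scheme \<Rightarrow> ('g \<Rightarrow> 'a::field) ring" where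
  "group_algebra G = \<lparr> carrier = {f. \<forall>g. g \<notin> carrier G \<longrightarrow> f g = 0},
     monoid.mult = (\<lambda>\<alpha> \<beta> g. if g \<in> carrier G then
                  (\<Sum>(h, k) \<in> {(h, k). h \<in> carrier G \<and> k \<in> carrier G \<and> h \<otimes>\<^bsub>G\<^esub> k = g}. \<alpha> h * \<beta> k)
                else 0),
     monoid.one = (\<lambda>g. if g = \<one>\<^bsub>G\<^esub> then 1 else 0),
     ring.zero = (\<lambda>g. 0),
     ring.add = (\<lambda>\<alpha> \<beta> g. \<alpha> g + \<beta> g) \<rparr>"

definition left_ideal :: "'a set \<Rightarrow> ('a, 'b) ring_scheme \<Rightarrow> bool" where
  "left_ideal I R \<longleftrightarrow> additive_subgroup I R \<and>
     (\<forall>r \<in> carrier R. \<forall>a \<in> I. r \<otimes>\<^bsub>R\<^esub> a \<in> I)"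

definition maximal_left_ideal :: "'a set \<Rightarrow> ('a, 'b) ring_scheme \<Rightarrow> bool" where
  "maximal_left_ideal I R \<longleftrightarrow> left_ideal I R \<and> I \<noteq> carrier R \<and>
     (\<forall>J. left_ideal J R \<and> I \<subseteq> J \<and> J \<noteq> carrier R \<longrightarrow> J = I)"

definition jacobson_radical :: "('a, 'b) ring_scheme \<Rightarrow> 'a set" where
  "jacobson_radical R = carrier R \<inter> \<Inter> {I. maximal_left_ideal I R}"

end

theory Submission
  imports Defs
begin


lemma ga_carrier: "f \<in> carrier (group_algebra G) \<longleftrightarrow> (\<forall>g. g \<notin> carrier G \<longrightarrow> f g = 0)"
  by (simp add: group_algebra_def)

lemma ga_mult_out: "g \<notin> carrier G \<Longrightarrow> (a \<otimes>\<^bsub>group_algebra G\<^esub> b) g = 0"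
  by (simp add: group_algebra_def)

lemma ga_add: "(a \<oplus>\<^bsub>group_algebra G\<^esub> b) = (\<lambda>g. a g + b g)"
  by (simp add: group_algebra_def)

lemma ga_zero: "\<zero>\<^bsub>group_algebra G\<^esub> = (\<lambda>g. 0)"
  by (simp add: group_algebra_def)

lemma ga_one: "\<one>\<^bsub>group_algebra G\<^esub> = (\<lambda>g. if g = \<one>\<^bsub>G\<^esub> then 1 else 0)"
  by (simp add: group_algebra_def)

context group begin

lemma ga_mult:
  assumes "g \<in> carrier G"
  shows "(a \<otimes>\<^bsub>group_algebra G\<^esub> b) g = (\<Sum>h\<in>carrier G. a h * (b (inv h \<otimes> g) :: 'c::field))"
proof -
  have e: "{(h, k). h \<in> carrier G \<and> k \<in> carrier G \<and> h \<otimes> k = g} = (\<lambda>h. (h, inv h \<otimes> g)) ` carrier G"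
  proof (intro Set.set_eqI iffI)
    fix p assume "p \<in> {(h, k). h \<in> carrier G \<and> k \<in> carrier G \<and> h \<otimes> k = g}"
    then obtain h k where hk: "p = (h, k)" "h \<in> carrier G" "k \<in> carrier G" "h \<otimes> k = g" by auto
    then have "k = inv h \<otimes> g" using assms by (simp add: inv_solve_left)
    then show "p \<in> (\<lambda>h. (h, inv h \<otimes> g)) ` carrier G" using hk by auto
  next
    fix p assume "p \<in> (\<lambda>h. (h, inv h \<otimes> g)) ` carrier G"
    then obtain h where "p = (h, inv h \<otimes> g)" "h \<in> carrier G" by auto
    then show "p \<in> {(h, k). h \<in> carrier G \<and> k \<in> carrier G \<and> h \<otimes> k = g}"
      using assms by (simp add: m_assoc[symmetric])
  qed
  have "(a \<otimes>\<^bsub>group_algebra G\<^esub> b) g = (\<Sum>(h, k) \<in> (\<lambda>h. (h, inv h \<otimes> g)) ` carrier G. a h * b k)"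
    using assms by (simp add: group_algebra_def e)
  also have "\<dots> = (\<Sum>h\<in>carrier G. a h * b (inv h \<otimes> g))"
    by (subst sum.reindex) (auto simp: inj_on_def)
  finally show ?thesis .
qed

lemma ga_ring:
  assumes fin: "finite (carrier G)"
  shows "ring (group_algebra G :: ('a \<Rightarrow> 'c::field) ring)"
proof (rule ringI)
  show "abelian_group (group_algebra G :: ('a \<Rightarrow> 'c::field) ring)"
  proof (rule abelian_groupI)
    fix x :: "'a \<Rightarrow> 'c" assume "x \<in> carrier (group_algebra G)"
    then show "\<exists>y\<in>carrier (group_algebra G). y \<oplus>\<^bsub>group_algebra G\<^esub> x = \<zero>\<^bsub>group_algebra G\<^esub>"
      by (intro bexI[of _ "\<lambda>g. - x g"]) (auto simp: ga_carrier ga_add ga_zero)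
  qed (auto simp: ga_carrier ga_add ga_zero algebra_simps)
next
  show "monoid (group_algebra G :: ('a \<Rightarrow> 'c::field) ring)"
  proof (rule monoidI)
    fix x y :: "'a \<Rightarrow> 'c"
    show "x \<otimes>\<^bsub>group_algebra G\<^esub> y \<in> carrier (group_algebra G)"
      by (simp add: ga_carrier ga_mult_out)
  next
    show "\<one>\<^bsub>group_algebra G\<^esub> \<in> carrier (group_algebra G :: ('a \<Rightarrow> 'c::field) ring)"
      by (simp add: ga_carrier ga_one)
  next
    fix x :: "'a \<Rightarrow> 'c" assume x: "x \<in> carrier (group_algebra G)"
    show "\<one>\<^bsub>group_algebra G\<^esub> \<otimes>\<^bsub>group_algebra G\<^esub> x = x"
    proof
      fix g show "(\<one>\<^bsub>group_algebra G\<^esub> \<otimes>\<^bsub>group_algebra G\<^esub> x) g = x g"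
      proof (cases "g \<in> carrier G")
        case True
        have "(\<Sum>h\<in>carrier G. (if h = \<one> then 1 else 0) * x (inv h \<otimes> g)) = (\<Sum>h\<in>carrier G. if h = \<one> then x g else 0)"
          using True by (intro sum.cong) auto
        then show ?thesis using True fin by (simp add: ga_mult ga_one)
      next
        case False then show ?thesis using x by (simp add: ga_mult_out ga_carrier)
      qed
    qed
    show "x \<otimes>\<^bsub>group_algebra G\<^esub> \<one>\<^bsub>group_algebra G\<^esub> = x"
    proof
      fix g show "(x \<otimes>\<^bsub>group_algebra G\<^esub> \<one>\<^bsub>group_algebra G\<^esub>) g = x g"
      proof (cases "g \<in> carrier G")
        case True
        have "\<And>h. h \<in> carrier G \<Longrightarrow> (inv h \<otimes> g = \<one>) = (h = g)"
          using True by (metis inv_closed inv_inv l_inv m_closed r_cancel r_inv)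
        then have "(\<Sum>h\<in>carrier G. x h * (if inv h \<otimes> g = \<one> then 1 else 0)) = (\<Sum>h\<in>carrier G. if h = g then x h else 0)"
          by (intro sum.cong) auto
        then show ?thesis using True fin by (simp add: ga_mult ga_one)
      next
        case False then show ?thesis using x by (simp add: ga_mult_out ga_carrier)
      qed
    qed
  next
    fix x y z :: "'a \<Rightarrow> 'c"
    assume x: "x \<in> carrier (group_algebra G)"
    show "x \<otimes>\<^bsub>group_algebra G\<^esub> y \<otimes>\<^bsub>group_algebra G\<^esub> z = x \<otimes>\<^bsub>group_algebra G\<^esub> (y \<otimes>\<^bsub>group_algebra G\<^esub> z)"
    proof
      fix g show "(x \<otimes>\<^bsub>group_algebra G\<^esub> y \<otimes>\<^bsub>group_algebra G\<^esub> z) g = (x \<otimes>\<^bsub>group_algebra G\<^esub> (y \<otimes>\<^bsub>group_algebra G\<^esub> z)) g"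
      proof (cases "g \<in> carrier G")
        case True
        have "(x \<otimes>\<^bsub>group_algebra G\<^esub> y \<otimes>\<^bsub>group_algebra G\<^esub> z) g
            = (\<Sum>h\<in>carrier G. (x \<otimes>\<^bsub>group_algebra G\<^esub> y) h * z (inv h \<otimes> g))"
          by (rule ga_mult[OF True])
        also have "\<dots> = (\<Sum>h\<in>carrier G. (\<Sum>k\<in>carrier G. x k * y (inv k \<otimes> h)) * z (inv h \<otimes> g))"
        proof (rule sum.cong[OF refl])
          fix h assume h: "h \<in> carrier G"
          then show "(x \<otimes>\<^bsub>group_algebra G\<^esub> y) h * z (inv h \<otimes> g) = (\<Sum>k\<in>carrier G. x k * y (inv k \<otimes> h)) * z (inv h \<otimes> g)"
            by (simp only: ga_mult)
        qed
        also have "\<dots> = (\<Sum>h\<in>carrier G. \<Sum>k\<in>carrier G. x k * y (inv k \<otimes> h) * z (inv h \<otimes> g))"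
          by (simp only: sum_distrib_right)
        also have "\<dots> = (\<Sum>k\<in>carrier G. \<Sum>h\<in>carrier G. x k * y (inv k \<otimes> h) * z (inv h \<otimes> g))"
          by (rule sum.swap)
        also have "\<dots> = (\<Sum>k\<in>carrier G. x k * (\<Sum>h\<in>carrier G. y (inv k \<otimes> h) * z (inv h \<otimes> g)))"
          by (simp only: sum_distrib_left mult.assoc)
        also have "\<dots> = (\<Sum>k\<in>carrier G. x k * (\<Sum>j\<in>carrier G. y j * z (inv j \<otimes> (inv k \<otimes> g))))"
        proof (rule sum.cong[OF refl])
          fix k assume k: "k \<in> carrier G"
          have "(\<Sum>h\<in>carrier G. y (inv k \<otimes> h) * z (inv h \<otimes> g)) = (\<Sum>j\<in>carrier G. y j * z (inv j \<otimes> (inv k \<otimes> g)))"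
          proof (rule sum.reindex_bij_witness[of _ "\<lambda>j. k \<otimes> j" "\<lambda>h. inv k \<otimes> h"])
            fix j assume j: "j \<in> carrier G"
            show "inv k \<otimes> (k \<otimes> j) = j" using j k by (simp add: m_assoc[symmetric])
            show "k \<otimes> j \<in> carrier G" using j k by simp
          next
            fix h assume h: "h \<in> carrier G"
            show "k \<otimes> (inv k \<otimes> h) = h" using h k by (simp add: m_assoc[symmetric])
            show "inv k \<otimes> h \<in> carrier G" using h k by simp
            have "inv (inv k \<otimes> h) \<otimes> (inv k \<otimes> g) = (inv h \<otimes> k) \<otimes> (inv k \<otimes> g)"
              using h k by (simp add: inv_mult_group)
            also have "\<dots> = inv h \<otimes> g"
            proof -
              have kk: "k \<otimes> (inv k \<otimes> g) = g" using k True by (simp add: m_assoc[symmetric])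
              show ?thesis using h k True by (simp add: m_assoc kk)
            qed
            finally show "y (inv k \<otimes> h) * z (inv (inv k \<otimes> h) \<otimes> (inv k \<otimes> g)) = y (inv k \<otimes> h) * z (inv h \<otimes> g)"
              by simp
          qed
          then show "x k * (\<Sum>h\<in>carrier G. y (inv k \<otimes> h) * z (inv h \<otimes> g)) = x k * (\<Sum>j\<in>carrier G. y j * z (inv j \<otimes> (inv k \<otimes> g)))"
            by simp
        qed
        also have "\<dots> = (\<Sum>k\<in>carrier G. x k * (y \<otimes>\<^bsub>group_algebra G\<^esub> z) (inv k \<otimes> g))"
        proof (rule sum.cong[OF refl])
          fix k assume k: "k \<in> carrier G"
          have "inv k \<otimes> g \<in> carrier G" using k True by simp
          then show "x k * (\<Sum>j\<in>carrier G. y j * z (inv j \<otimes> (inv k \<otimes> g))) = x k * (y \<otimes>\<^bsub>group_algebra G\<^esub> z) (inv k \<otimes> g)"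
            by (simp only: ga_mult)
        qed
        also have "\<dots> = (x \<otimes>\<^bsub>group_algebra G\<^esub> (y \<otimes>\<^bsub>group_algebra G\<^esub> z)) g"
          by (rule ga_mult[OF True, symmetric])
        finally show ?thesis .
      next
        case False then show ?thesis by (simp add: ga_mult_out)
      qed
    qed
  qed
next
  fix x y z :: "'a \<Rightarrow> 'c"
  show "(x \<oplus>\<^bsub>group_algebra G\<^esub> y) \<otimes>\<^bsub>group_algebra G\<^esub> z = x \<otimes>\<^bsub>group_algebra G\<^esub> z \<oplus>\<^bsub>group_algebra G\<^esub> y \<otimes>\<^bsub>group_algebra G\<^esub> z"
  proof
    fix g show "((x \<oplus>\<^bsub>group_algebra G\<^esub> y) \<otimes>\<^bsub>group_algebra G\<^esub> z) g = (x \<otimes>\<^bsub>group_algebra G\<^esub> z \<oplus>\<^bsub>group_algebra G\<^esub> y \<otimes>\<^bsub>group_algebra G\<^esub> z) g"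
    proof (cases "g \<in> carrier G")
      case True
      then show ?thesis by (simp only: ga_mult ga_add distrib_right sum.distrib)
    next
      case False then show ?thesis by (simp add: ga_mult_out ga_add)
    qed
  qed
  show "z \<otimes>\<^bsub>group_algebra G\<^esub> (x \<oplus>\<^bsub>group_algebra G\<^esub> y) = z \<otimes>\<^bsub>group_algebra G\<^esub> x \<oplus>\<^bsub>group_algebra G\<^esub> z \<otimes>\<^bsub>group_algebra G\<^esub> y"
  proof
    fix g show "(z \<otimes>\<^bsub>group_algebra G\<^esub> (x \<oplus>\<^bsub>group_algebra G\<^esub> y)) g = (z \<otimes>\<^bsub>group_algebra G\<^esub> x \<oplus>\<^bsub>group_algebra G\<^esub> z \<otimes>\<^bsub>group_algebra G\<^esub> y) g"
    proof (cases "g \<in> carrier G")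
      case True
      then show ?thesis by (simp only: ga_mult ga_add distrib_left sum.distrib)
    next
      case False then show ?thesis by (simp add: ga_mult_out ga_add)
    qed
  qed
qed

end


lemma (in ring) nil_in_jacobson:
  assumes I: "I \<subseteq> carrier R"
    and cl: "\<And>r a. r \<in> carrier R \<Longrightarrow> a \<in> I \<Longrightarrow> r \<otimes> a \<in> I"
    and nil: "\<And>b. b \<in> I \<Longrightarrow> b \<otimes> b \<otimes> b = \<zero>"
  shows "I \<subseteq> jacobson_radical R"
proof
  fix a assume aI: "a \<in> I"
  then have a: "a \<in> carrier R" using I by auto
  show "a \<in> jacobson_radical R"
    unfolding jacobson_radical_def
  proof (intro IntI a InterI CollectI, simp)
    fix M assume M: "maximal_left_ideal M R"
    then have Ml: "left_ideal M R" and Mne: "M \<noteq> carrier R"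
      and Mmax: "\<And>J. left_ideal J R \<Longrightarrow> M \<subseteq> J \<Longrightarrow> J \<noteq> carrier R \<Longrightarrow> J = M"
      by (auto simp: maximal_left_ideal_def)
    then have Madd: "additive_subgroup M R" and Mmul: "\<And>r x. r \<in> carrier R \<Longrightarrow> x \<in> M \<Longrightarrow> r \<otimes> x \<in> M"
      by (auto simp: left_ideal_def)
    have MC: "M \<subseteq> carrier R" using additive_subgroup.a_subset[OF Madd] .
    show "a \<in> M"
    proof (rule ccontr)
      assume aM: "a \<notin> M"
      define L where "L = {x. \<exists>m\<in>M. \<exists>r\<in>carrier R. x = m \<oplus> r \<otimes> a}"
      have LC: "L \<subseteq> carrier R" using MC a by (auto simp: L_def)
      have MsubL: "M \<subseteq> L"
      proof
        fix m assume "m \<in> M"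
        then have "m = m \<oplus> \<zero> \<otimes> a" "m \<in> carrier R" using a MC by auto
        then show "m \<in> L" unfolding L_def using \<open>m \<in> M\<close> by blast
      qed
      have aL: "a \<in> L"
      proof -
        have "a = \<zero> \<oplus> \<one> \<otimes> a" using a by simp
        moreover have "\<zero> \<in> M" using additive_subgroup.zero_closed[OF Madd] .
        ultimately show ?thesis unfolding L_def by blast
      qed
      have Lid: "left_ideal L R"
        unfolding left_ideal_def
      proof (intro conjI ballI)
        show "additive_subgroup L R"
        proof (rule additive_subgroupI, rule group.subgroupI[OF a_group])
          show "L \<subseteq> carrier (add_monoid R)" using LC by simp
          show "L \<noteq> {}" using aL by auto
        next
          fix x assume "x \<in> L"
          then obtain m r where mr: "m \<in> M" "r \<in> carrier R" "x = m \<oplus> r \<otimes> a" by (auto simp: L_def)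
          have "inv\<^bsub>add_monoid R\<^esub> x = \<ominus> x" by (simp add: a_inv_def)
          also have "\<dots> = (\<ominus> m) \<oplus> (\<ominus> r) \<otimes> a"
            using mr a MC by (simp add: minus_add l_minus subsetD)
          finally show "inv\<^bsub>add_monoid R\<^esub> x \<in> L"
            unfolding L_def using mr additive_subgroup.a_inv_closed[OF Madd] by blast
        next
          fix x y assume "x \<in> L" "y \<in> L"
          then obtain m r m' r' where mr: "m \<in> M" "r \<in> carrier R" "x = m \<oplus> r \<otimes> a"
            "m' \<in> M" "r' \<in> carrier R" "y = m' \<oplus> r' \<otimes> a" by (auto simp: L_def)
          have "x \<otimes>\<^bsub>add_monoid R\<^esub> y = (m \<oplus> m') \<oplus> (r \<oplus> r') \<otimes> a"
            using mr a MC by (simp add: l_distr subsetD a_ac)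
          then show "x \<otimes>\<^bsub>add_monoid R\<^esub> y \<in> L"
            unfolding L_def using mr additive_subgroup.a_closed[OF Madd] by blast
        qed
      next
        fix r x assume r: "r \<in> carrier R" and "x \<in> L"
        then obtain m q where mq: "m \<in> M" "q \<in> carrier R" "x = m \<oplus> q \<otimes> a" by (auto simp: L_def)
        have "r \<otimes> x = r \<otimes> m \<oplus> (r \<otimes> q) \<otimes> a"
          using mq a MC r by (simp add: r_distr m_assoc subsetD)
        then show "r \<otimes> x \<in> L" unfolding L_def using mq r Mmul by blast
      qed
      have "L = carrier R"
      proof (rule ccontr)
        assume "L \<noteq> carrier R"
        then have "L = M" using Mmax[OF Lid MsubL] by blast
        then show False using aL aM by simp
      qed
      then have "\<one> \<in> L" by simp
      then obtain m r where mr: "m \<in> M" "r \<in> carrier R" "\<one> = m \<oplus> r \<otimes> a" by (auto simp: L_def)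
      define b where "b = r \<otimes> a"
      have bI: "b \<in> I" using cl[OF mr(2) aI] by (simp add: b_def)
      have b: "b \<in> carrier R" using bI I by auto
      have m: "m \<in> carrier R" using mr MC by auto
      have mb: "m = \<one> \<ominus> b" using mr m b by (simp add: b_def a_minus_def a_assoc r_neg)
      define u where "u = \<one> \<oplus> b \<oplus> b \<otimes> b"
      have u: "u \<in> carrier R" using b by (simp add: u_def)
      have "u \<otimes> m = u \<ominus> u \<otimes> b" using u b by (simp add: mb r_minus a_minus_def r_distr)
      also have "u \<otimes> b = b \<oplus> b \<otimes> b \<oplus> b \<otimes> b \<otimes> b" using b by (simp add: u_def l_distr)
      also have "\<dots> = b \<oplus> b \<otimes> b" using b nil[OF bI] by simp
      also have "u \<ominus> (b \<oplus> b \<otimes> b) = \<one>"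
      proof -
        have "u = \<one> \<oplus> (b \<oplus> b \<otimes> b)" using b by (simp add: u_def a_assoc)
        then show ?thesis using b by (simp add: a_minus_def a_assoc r_neg)
      qed
      finally have "u \<otimes> m = \<one>" .
      then have one: "\<one> \<in> M" using Mmul[OF u mr(1)] by simp
      have "carrier R \<subseteq> M"
      proof
        fix x assume "x \<in> carrier R"
        then show "x \<in> M" using Mmul[OF _ one] by (metis r_one)
      qed
      then show False using Mne MC by auto
    qed
  qed
qed



lemma T_carrier: "carrier (T_group m t) = {0..<m} \<times> {0..<3}"
  by (simp add: T_group_def)

lemma T_mult_eq: "x \<otimes>\<^bsub>T_group m t\<^esub> y = T_mult m t x y"
  by (simp add: T_group_def)

lemma T_one: "\<one>\<^bsub>T_group m t\<^esub> = (0, 0)"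
  by (simp add: T_group_def)

lemma tpow:
  assumes "[t ^ 3 = 1] (mod int m)"
  shows "[t ^ (2 * n) = t ^ (2 * (n mod 3))] (mod int m)"
proof -
  have e: "t ^ (2 * n) = (t ^ 3) ^ (2 * (n div 3)) * t ^ (2 * (n mod 3))"
    by (metis (no_types, lifting) div_mult_mod_eq add_mult_distrib2 mult.commute mult.left_commute power_add power_mult)
  have "[(t ^ 3) ^ (2 * (n div 3)) * t ^ (2 * (n mod 3)) = 1 ^ (2 * (n div 3)) * t ^ (2 * (n mod 3))] (mod int m)"
    by (intro cong_mult cong_pow assms cong_refl)
  then show ?thesis by (simp add: e)
qed

lemma T_group_is_group:
  assumes m: "0 < m" and t3: "[t ^ 3 = 1] (mod int m)"
  shows "group (T_group m t)"
proof (rule groupI)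
  fix x y assume "x \<in> carrier (T_group m t)" "y \<in> carrier (T_group m t)"
  then show "x \<otimes>\<^bsub>T_group m t\<^esub> y \<in> carrier (T_group m t)"
    using m by (auto simp: T_carrier T_mult_eq T_mult_def nat_less_iff)
next
  show "\<one>\<^bsub>T_group m t\<^esub> \<in> carrier (T_group m t)" using m by (simp add: T_one T_carrier)
next
  fix x assume "x \<in> carrier (T_group m t)"
  then show "\<one>\<^bsub>T_group m t\<^esub> \<otimes>\<^bsub>T_group m t\<^esub> x = x"
    by (auto simp: T_one T_carrier T_mult_eq T_mult_def)
next
  fix x y z assume x: "x \<in> carrier (T_group m t)" and y: "y \<in> carrier (T_group m t)"
    and z: "z \<in> carrier (T_group m t)"
  obtain a b where ab: "x = (a, b)" "b < 3" using x by (cases x) (auto simp: T_carrier)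
  obtain c d where cd: "y = (c, d)" "d < 3" using y by (cases y) (auto simp: T_carrier)
  obtain e f where ef: "z = (e, f)" "f < 3" using z by (cases z) (auto simp: T_carrier)
  have mi: "int m > 0" using m by simp
  have tt: "t ^ (2 * ((b + d) mod 3)) mod int m = (t ^ (2 * b) * t ^ (2 * d)) mod int m"
    using tpow[OF t3, of "b + d"] by (simp add: cong_def add_mult_distrib2 power_add)
  have s1: "((int a + int c * t ^ (2 * b)) mod int m + int e * t ^ (2 * ((b + d) mod 3))) mod int m
      = (int a + int c * t ^ (2 * b) + int e * t ^ (2 * ((b + d) mod 3))) mod int m"
    by (simp add: mod_add_left_eq)
  have s2: "(int a + int c * t ^ (2 * b) + int e * t ^ (2 * ((b + d) mod 3))) mod int m
      = (int a + int c * t ^ (2 * b) + int e * (t ^ (2 * b) * t ^ (2 * d))) mod int m"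
    by (rule mod_add_cong[OF refl mod_mult_cong[OF refl tt]])
  have s3: "(int a + ((int c + int e * t ^ (2 * d)) mod int m) * t ^ (2 * b)) mod int m
      = (int a + (int c + int e * t ^ (2 * d)) * t ^ (2 * b)) mod int m"
    by (rule mod_add_cong[OF refl mod_mult_cong[OF mod_mod_trivial refl]])
  have s4: "int a + (int c + int e * t ^ (2 * d)) * t ^ (2 * b) = int a + int c * t ^ (2 * b) + int e * (t ^ (2 * b) * t ^ (2 * d))"
    by (simp add: algebra_simps)
  have "((int a + int c * t ^ (2 * b)) mod int m + int e * t ^ (2 * ((b + d) mod 3))) mod int m
      = (int a + ((int c + int e * t ^ (2 * d)) mod int m) * t ^ (2 * b)) mod int m"
    using s1 s2 s3 s4 by simp
  then have fst_eq: "((int a + int c * t ^ (2 * b)) mod int m + int e * t ^ (2 * ((b + d) mod 3))) mod int m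
      = (int a + ((int c + int e * t ^ (2 * d)) mod int m) * t ^ (2 * b)) mod int m" .
  show "x \<otimes>\<^bsub>T_group m t\<^esub> y \<otimes>\<^bsub>T_group m t\<^esub> z = x \<otimes>\<^bsub>T_group m t\<^esub> (y \<otimes>\<^bsub>T_group m t\<^esub> z)"
    using mi fst_eq by (simp add: ab cd ef T_mult_eq T_mult_def mod_add_left_eq add.assoc) (simp add: add.commute mod_add_right_eq)
next
  fix x assume x: "x \<in> carrier (T_group m t)"
  obtain a b where ab: "x = (a, b)" "b < 3" "a < m" using x by (cases x) (auto simp: T_carrier)
  define d where "d = (3 - b) mod 3"
  define y where "y = (nat ((- int a * t ^ (2 * d)) mod int m), d)"
  have mi: "int m > 0" using m by simp
  have "y \<in> carrier (T_group m t)" using mi by (auto simp: y_def d_def T_carrier nat_less_iff)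
  moreover have "y \<otimes>\<^bsub>T_group m t\<^esub> x = \<one>\<^bsub>T_group m t\<^esub>"
  proof -
    have "((- int a * t ^ (2 * d)) mod int m + int a * t ^ (2 * d)) mod int m = 0"
      by (simp add: mod_add_left_eq)
    moreover have "(d + b) mod 3 = 0"
    proof -
      have "b = 0 \<or> b = 1 \<or> b = 2" using ab(2) by linarith
      then show ?thesis by (auto simp: d_def)
    qed
    ultimately show ?thesis using mi by (simp add: y_def ab T_mult_eq T_mult_def T_one)
  qed
  ultimately show "\<exists>y\<in>carrier (T_group m t). y \<otimes>\<^bsub>T_group m t\<^esub> x = \<one>\<^bsub>T_group m t\<^esub>" by blast
qed



lemma T_pow_x:
  assumes m: "0 < m" and t3: "[t ^ 3 = 1] (mod int m)" and a: "a < m"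
  shows "(a, 0) [^]\<^bsub>T_group m t\<^esub> (n::nat) = ((n * a) mod m, 0)"
proof (induction n)
  case 0 then show ?case using m by (simp add: T_one)
next
  case (Suc n)
  interpret G: group "T_group m t" using T_group_is_group[OF m t3] .
  have "(a, 0) [^]\<^bsub>T_group m t\<^esub> Suc n = ((n * a) mod m, 0) \<otimes>\<^bsub>T_group m t\<^esub> (a, 0)"
    using Suc.IH by simp
  also have "\<dots> = (nat ((int ((n * a) mod m) + int a) mod int m), 0)"
    by (simp add: T_mult_eq T_mult_def)
  also have "(int ((n * a) mod m) + int a) mod int m = int (((n * a) mod m + a) mod m)"
    by (simp only: of_nat_add[symmetric] of_nat_mod[symmetric])
  also have "((n * a) mod m + a) mod m = (Suc n * a) mod m"
    by (simp add: mod_add_left_eq mod_add_right_eq add.commute)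
  finally show ?case by simp
qed

lemma sum3:
  fixes t :: int
  assumes t3: "[t ^ 3 = 1] (mod int m)" and g: "gcd (int m) (t - 1) = 1"
  shows "int m dvd 1 + t ^ 2 + t ^ 4"
proof -
  have "int m dvd t ^ 3 - 1" using t3 by (simp add: cong_iff_dvd_diff dvd_diff_commute)
  moreover have "t ^ 3 - 1 = (t - 1) * (1 + t + t ^ 2)" by (simp add: algebra_simps eval_nat_numeral)
  ultimately have "int m dvd (1 + t + t ^ 2)"
    using g by (metis coprime_dvd_mult_right_iff coprime_iff_gcd_eq_1)
  moreover have "int m dvd t ^ 4 - t"
  proof -
    have "t ^ 4 - t = t * (t ^ 3 - 1)" by (simp add: algebra_simps eval_nat_numeral)
    then show ?thesis using \<open>int m dvd t ^ 3 - 1\<close> by simp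
  qed
  ultimately have "int m dvd (1 + t + t ^ 2) + (t ^ 4 - t)" by (rule dvd_add)
  then show ?thesis by (simp add: algebra_simps)
qed

lemma T_ord:
  assumes m: "m = 3 * k + 1" and t3: "[t ^ 3 = 1] (mod int m)" and g: "gcd (int m) (t - 1) = 1"
    and x: "x \<in> carrier (T_group m t)"
  shows "(\<exists>n::nat. group.ord (T_group m t) x = 3 ^ n) \<longleftrightarrow> (snd x \<noteq> 0 \<or> x = (0, 0))"
proof -
  have m0: "0 < m" using m by simp
  interpret G: group "T_group m t" using T_group_is_group[OF m0 t3] .
  obtain a b where ab: "x = (a, b)" "b < 3" "a < m" using x by (cases x) (auto simp: T_carrier)
  show ?thesis
  proof (cases "b = 0")
    case True
    show ?thesis
    proof (cases "a = 0")
      case True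
      then have "x = \<one>\<^bsub>T_group m t\<^esub>" using ab \<open>b = 0\<close> by (simp add: T_one)
      then have "G.ord x = 1" by simp
      then show ?thesis using ab True \<open>b = 0\<close> by (metis power_0)
    next
      case False
      have "x [^]\<^bsub>T_group m t\<^esub> m = \<one>\<^bsub>T_group m t\<^esub>"
        using ab \<open>b = 0\<close> T_pow_x[OF m0 t3 ab(3)] by (simp add: T_one)
      then have dv: "G.ord x dvd m" using G.pow_eq_id[OF x] by simp
      have "\<not> (\<exists>n::nat. G.ord x = 3 ^ n)"
      proof
        assume "\<exists>n::nat. G.ord x = 3 ^ n"
        then obtain n where n: "G.ord x = 3 ^ n" by blast
        show False
        proof (cases n)
          case 0
          then have "x = (0, 0)" using n G.ord_eq_1[OF x] by (simp add: T_one)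
          then show False using ab False by simp
        next
          case (Suc n')
          then have "3 dvd m" using dv n by (metis dvd_mult2 dvd_refl dvd_trans power_Suc)
          then show False using m by presburger
        qed
      qed
      then show ?thesis using ab \<open>b = 0\<close> False by simp
    qed
  next
    case False
    have ipos: "int m > 0" using m0 by simp
    have d: "int m dvd 1 + t ^ 2 + t ^ 4" using sum3[OF t3 g] .
    have "x [^]\<^bsub>T_group m t\<^esub> (3::nat) = x \<otimes>\<^bsub>T_group m t\<^esub> x \<otimes>\<^bsub>T_group m t\<^esub> x"
      using x by (simp add: numeral_3_eq_3)
    also have "\<dots> = (0, 0)"
    proof -
      have bb: "b = 1 \<or> b = 2" using ab False by auto
      have "((int a + int a * t ^ (2 * b)) mod int m + int a * t ^ (2 * ((b + b) mod 3))) mod int m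
           = (int a * (1 + t ^ 2 + t ^ 4)) mod int m"
      proof -
        have pw: "t ^ (2 * b) + t ^ (2 * ((b + b) mod 3)) = t ^ 2 + t ^ 4"
          using bb by (elim disjE) simp_all
        have "((int a + int a * t ^ (2 * b)) mod int m + int a * t ^ (2 * ((b + b) mod 3))) mod int m
           = (int a + int a * t ^ (2 * b) + int a * t ^ (2 * ((b + b) mod 3))) mod int m"
          by (simp only: mod_add_left_eq)
        also have "int a + int a * t ^ (2 * b) + int a * t ^ (2 * ((b + b) mod 3))
           = int a * (1 + (t ^ (2 * b) + t ^ (2 * ((b + b) mod 3))))"
          by (simp only: distrib_left mult_1_right add.assoc)
        also have "\<dots> = int a * (1 + t ^ 2 + t ^ 4)" by (simp only: pw add.assoc)
        finally show ?thesis .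
      qed
      also have "\<dots> = 0" using d by simp
      finally have "((int a + int a * t ^ (2 * b)) mod int m + int a * t ^ (2 * ((b + b) mod 3))) mod int m = 0" .
      moreover have "((b + b) mod 3 + b) mod 3 = 0" using bb by auto
      ultimately show ?thesis using ipos by (simp add: ab T_mult_eq T_mult_def)
    qed
    finally have "x [^]\<^bsub>T_group m t\<^esub> (3::nat) = \<one>\<^bsub>T_group m t\<^esub>" by (simp add: T_one)
    then have "G.ord x dvd 3" using G.pow_eq_id[OF x] by simp
    moreover have "G.ord x \<noteq> 1" using G.ord_eq_1[OF x] ab False by (simp add: T_one)
    ultimately have "G.ord x = 3"
    proof -
      assume o3: "G.ord x dvd 3" and o1: "G.ord x \<noteq> 1"
      have "G.ord x \<le> 3" using dvd_imp_le[OF o3] by simp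
      moreover have "G.ord x \<noteq> 0" using o3 by (intro notI) simp
      moreover have "G.ord x \<noteq> 2" using o3 by (intro notI) simp
      ultimately show ?thesis using o1 by linarith
    qed
    then have "G.ord x = 3 ^ 1" by simp
    then have "\<exists>n::nat. G.ord x = 3 ^ n" by (rule exI)
    then show ?thesis using ab False by simp
  qed
qed



lemma sumG:
  "(\<Sum>h\<in>carrier (T_group m t). f (snd h)) = of_nat m * (f 0 + f 1 + (f 2 :: 'f::field))"
proof -
  have "(\<Sum>h\<in>{0..<m} \<times> {0..<3::nat}. f (snd h)) = (\<Sum>a\<in>{0..<m}. \<Sum>d\<in>{0..<3::nat}. f d)"
  proof -
    have "(\<Sum>h\<in>{0..<m} \<times> {0..<3::nat}. f (snd h)) = (\<Sum>(a, d)\<in>{0..<m} \<times> {0..<3::nat}. f d)"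
      by (simp add: split_beta)
    also have "\<dots> = (\<Sum>a\<in>{0..<m}. \<Sum>d\<in>{0..<3::nat}. f d)"
      by (rule sum.cartesian_product[symmetric])
    finally show ?thesis .
  qed
  also have "\<dots> = of_nat m * (f 0 + f 1 + f 2)"
    by (simp add: numeral_3_eq_3 add.commute numeral_2_eq_2)
  finally show ?thesis by (simp add: T_carrier)
qed

lemma snd_prod:
  assumes "h \<in> carrier (T_group m t)" "k \<in> carrier (T_group m t)"
  shows "snd (h \<otimes>\<^bsub>T_group m t\<^esub> k) = (snd h + snd k) mod 3"
  by (simp add: T_mult_eq T_mult_def)

lemma snd_inv:
  assumes m0: "0 < m" and t3: "[t ^ 3 = 1] (mod int m)"
    and h: "h \<in> carrier (T_group m t)" and g: "g \<in> carrier (T_group m t)"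
  shows "snd (inv\<^bsub>T_group m t\<^esub> h \<otimes>\<^bsub>T_group m t\<^esub> g) = (snd g + 3 - snd h) mod 3"
proof -
  interpret G: group "T_group m t" using T_group_is_group[OF m0 t3] .
  define k where "k = inv\<^bsub>T_group m t\<^esub> h \<otimes>\<^bsub>T_group m t\<^esub> g"
  have k: "k \<in> carrier (T_group m t)" using h g by (simp add: k_def)
  have "h \<otimes>\<^bsub>T_group m t\<^esub> k = g" using h g by (simp add: k_def G.m_assoc[symmetric])
  then have "snd g = (snd h + snd k) mod 3" using snd_prod[OF h k] by simp
  moreover have "snd h < 3" "snd k < 3" using h k by (auto simp: T_carrier)
  then have "snd h = 0 \<or> snd h = 1 \<or> snd h = 2" "snd k = 0 \<or> snd k = 1 \<or> snd k = 2" by linarith+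
  ultimately have "(snd g + 3 - snd h) mod 3 = snd k" by (elim disjE) simp_all
  then show ?thesis unfolding k_def[symmetric] by simp
qed

lemma conv_snd:
  assumes m0: "0 < m" and t3: "[t ^ 3 = 1] (mod int m)"
    and b: "\<And>h. h \<in> carrier (T_group m t) \<Longrightarrow> \<beta> h = l (snd h)"
    and c: "\<And>h. h \<in> carrier (T_group m t) \<Longrightarrow> \<gamma> h = u (snd h)"
    and g: "g \<in> carrier (T_group m t)"
  shows "(\<beta> \<otimes>\<^bsub>group_algebra (T_group m t)\<^esub> \<gamma>) g =
     of_nat m * (l 0 * u ((snd g + 3) mod 3) + l 1 * u ((snd g + 2) mod 3) + l 2 * (u ((snd g + 1) mod 3) :: 'f::field))"
proof -
  interpret G: group "T_group m t" using T_group_is_group[OF m0 t3] .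
  define f where "f = (\<lambda>d. l d * u ((snd g + 3 - d) mod 3))"
  have 1: "(\<beta> \<otimes>\<^bsub>group_algebra (T_group m t)\<^esub> \<gamma>) g = (\<Sum>h\<in>carrier (T_group m t). \<beta> h * \<gamma> (inv\<^bsub>T_group m t\<^esub> h \<otimes>\<^bsub>T_group m t\<^esub> g))"
    by (rule G.ga_mult[OF g])
  have 2: "(\<Sum>h\<in>carrier (T_group m t). \<beta> h * \<gamma> (inv\<^bsub>T_group m t\<^esub> h \<otimes>\<^bsub>T_group m t\<^esub> g)) = (\<Sum>h\<in>carrier (T_group m t). f (snd h))"
  proof (intro sum.cong refl)
    fix h assume h: "h \<in> carrier (T_group m t)"
    have k: "inv\<^bsub>T_group m t\<^esub> h \<otimes>\<^bsub>T_group m t\<^esub> g \<in> carrier (T_group m t)" using h g by simp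
    show "\<beta> h * \<gamma> (inv\<^bsub>T_group m t\<^esub> h \<otimes>\<^bsub>T_group m t\<^esub> g) = f (snd h)"
      using b[OF h] c[OF k] snd_inv[OF m0 t3 h g] by (simp add: f_def)
  qed
  have 3: "(\<Sum>h\<in>carrier (T_group m t). f (snd h)) = of_nat m * (f 0 + f 1 + f 2)"
    by (rule sumG)
  have e1: "snd g + 3 - 1 = snd g + 2" and e2: "snd g + 3 - 2 = snd g + 1" by simp_all
  have 4: "f 0 + f 1 + f 2 = l 0 * u ((snd g + 3) mod 3) + l 1 * u ((snd g + 2) mod 3) + l 2 * u ((snd g + 1) mod 3)"
    unfolding f_def by (simp only: e1 e2 diff_zero)
  show ?thesis by (simp only: 1 2 3 4)
qed



lemma poly0:
  fixes x y z :: "'a::comm_ring_1"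
  shows "(x * x + y * z + z * y) * x + (x * y + y * x + z * z) * z + (x * z + y * y + z * x) * y
     = (x + y + z) * (x * x + y * y + z * z - x * y - y * z - z * x) + 3 * (3 * x * y * z)"
  by (simp add: algebra_simps)

lemma poly1:
  fixes x y z :: "'a::comm_ring_1"
  shows "(x * x + y * z + z * y) * y + (x * y + y * x + z * z) * x + (x * z + y * y + z * x) * z
     = 3 * (x * x * y + y * y * z + x * z * z)"
  by (simp add: algebra_simps)

lemma poly2:
  fixes x y z :: "'a::comm_ring_1"
  shows "(x * x + y * z + z * y) * z + (x * y + y * x + z * z) * y + (x * z + y * y + z * x) * x
     = 3 * (x * x * z + y * z * z + x * y * y)"
  by (simp add: algebra_simps)

lemma inv_eq_one_iff:
  fixes G (structure)
  assumes "group G" "h \<in> carrier G" "g \<in> carrier G"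
  shows "inv\<^bsub>G\<^esub> h \<otimes>\<^bsub>G\<^esub> g = \<one>\<^bsub>G\<^esub> \<longleftrightarrow> h = g"
proof -
  interpret group G by fact
  show ?thesis
  proof
    assume eq: "inv h \<otimes> g = \<one>"
    have "h \<otimes> (inv h \<otimes> g) = g" using assms by (simp add: m_assoc[symmetric])
    then show "h = g" using eq assms by simp
  next
    assume "h = g" then show "inv h \<otimes> g = \<one>" using assms by simp
  qed
qed

lemma ann_form:
  fixes \<beta> :: "nat \<times> nat \<Rightarrow> 'f::field"
  assumes m0: "0 < m" and t3: "[t ^ 3 = 1] (mod int m)" and m1: "of_nat m = (1::'f)"
    and bz: "\<beta> \<otimes>\<^bsub>group_algebra (T_group m t)\<^esub>
      (\<lambda>g. if g \<in> carrier (T_group m t) \<and> (snd g \<noteq> 0 \<or> g = (0, 0)) then (1::'f) else 0) = (\<lambda>g. 0)"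
  shows "\<exists>l. (\<forall>h\<in>carrier (T_group m t). \<beta> h = l (snd h)) \<and> l 0 + l 1 + l 2 = 0"
proof -
  interpret G: group "T_group m t" using T_group_is_group[OF m0 t3] .
  define sT where "sT = (\<lambda>g. if g \<in> carrier (T_group m t) \<and> (snd g \<noteq> 0 \<or> g = (0, 0)) then (1::'f) else 0)"
  have fin: "finite (carrier (T_group m t))" by (simp add: T_carrier)
  define S where "S b = (\<Sum>h\<in>carrier (T_group m t). if snd h \<noteq> b then \<beta> h else 0)" for b
  have key: "\<beta> g = - S (snd g)" if g: "g \<in> carrier (T_group m t)" for g
  proof -
    have "0 = (\<beta> \<otimes>\<^bsub>group_algebra (T_group m t)\<^esub> sT) g" using bz by (simp add: sT_def)
    also have "\<dots> = (\<Sum>h\<in>carrier (T_group m t). \<beta> h * sT (inv\<^bsub>T_group m t\<^esub> h \<otimes>\<^bsub>T_group m t\<^esub> g))"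
      by (rule G.ga_mult[OF g])
    also have "\<dots> = (\<Sum>h\<in>carrier (T_group m t). (if snd h \<noteq> snd g then \<beta> h else 0) + (if h = g then \<beta> h else 0))"
    proof (rule sum.cong[OF refl])
      fix h assume h: "h \<in> carrier (T_group m t)"
      have k: "inv\<^bsub>T_group m t\<^esub> h \<otimes>\<^bsub>T_group m t\<^esub> g \<in> carrier (T_group m t)" using h g by simp
      have sh: "snd h < 3" "snd g < 3" using h g by (auto simp: T_carrier)
      then have "snd h = 0 \<or> snd h = 1 \<or> snd h = 2" "snd g = 0 \<or> snd g = 1 \<or> snd g = 2" by linarith+
      then have "((snd g + 3 - snd h) mod 3 \<noteq> 0) = (snd h \<noteq> snd g)" by (elim disjE) simp_all
      then have s1: "(snd (inv\<^bsub>T_group m t\<^esub> h \<otimes>\<^bsub>T_group m t\<^esub> g) \<noteq> 0) = (snd h \<noteq> snd g)"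
        using snd_inv[OF m0 t3 h g] by simp
      have s2: "(inv\<^bsub>T_group m t\<^esub> h \<otimes>\<^bsub>T_group m t\<^esub> g = (0, 0)) = (h = g)"
        using inv_eq_one_iff[OF G.is_group h g] by (simp add: T_one)
      have "sT (inv\<^bsub>T_group m t\<^esub> h \<otimes>\<^bsub>T_group m t\<^esub> g) = (if snd h \<noteq> snd g \<or> h = g then 1 else 0)"
        using k s1 s2 by (simp add: sT_def)
      then show "\<beta> h * sT (inv\<^bsub>T_group m t\<^esub> h \<otimes>\<^bsub>T_group m t\<^esub> g) = (if snd h \<noteq> snd g then \<beta> h else 0) + (if h = g then \<beta> h else 0)"
        by auto
    qed
    also have "\<dots> = S (snd g) + \<beta> g"
      using fin g by (simp add: sum.distrib S_def)
    finally show ?thesis by (simp add: eq_neg_iff_add_eq_0 add.commute)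
  qed
  define l where "l b = - S b" for b
  have lh: "\<forall>h\<in>carrier (T_group m t). \<beta> h = l (snd h)" using key by (simp add: l_def)
  have "S 0 = (\<Sum>h\<in>carrier (T_group m t). (\<lambda>d. if d \<noteq> 0 then l d else 0) (snd h))"
    unfolding S_def using lh by (intro sum.cong refl) simp
  also have "\<dots> = of_nat m * ((\<lambda>d. if d \<noteq> 0 then l d else 0) 0 + (\<lambda>d. if d \<noteq> 0 then l d else 0) 1 + (\<lambda>d. if d \<noteq> 0 then l d else 0) 2)"
    by (rule sumG)
  also have "\<dots> = l 1 + l 2" using m1 by simp
  finally have "l 0 + l 1 + l 2 = 0" by (simp add: l_def)
  then show ?thesis using lh by blast
qed

lemma cube_zero:
  fixes \<beta> :: "nat \<times> nat \<Rightarrow> 'f::field"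
  assumes m0: "0 < m" and t3: "[t ^ 3 = 1] (mod int m)" and m1: "of_nat m = (1::'f)"
    and three: "(3::'f) = 0"
    and lh: "\<forall>h\<in>carrier (T_group m t). \<beta> h = l (snd h)" and l0: "l 0 + l 1 + l 2 = 0"
  shows "\<beta> \<otimes>\<^bsub>group_algebra (T_group m t)\<^esub> \<beta> \<otimes>\<^bsub>group_algebra (T_group m t)\<^esub> \<beta> = (\<lambda>g. 0)"
proof
  fix g
  define \<nu> where "\<nu> b = l 0 * l ((b + 3) mod 3) + l 1 * l ((b + 2) mod 3) + l 2 * l ((b + 1) mod 3)" for b
  have bb: "(\<beta> \<otimes>\<^bsub>group_algebra (T_group m t)\<^esub> \<beta>) h = \<nu> (snd h)" if h: "h \<in> carrier (T_group m t)" for h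
    using conv_snd[OF m0 t3, of \<beta> l \<beta> l h] lh h m1 by (simp add: \<nu>_def)
  have a0: "((0::nat) + 3) mod 3 = 0" "((0::nat) + 2) mod 3 = 2" "((0::nat) + 1) mod 3 = 1" by simp_all
  have n0: "\<nu> 0 = l 0 * l 0 + l 1 * l 2 + l 2 * l 1" unfolding \<nu>_def by (simp only: a0)
  have a1': "((1::nat) + 3) mod 3 = 1" "((1::nat) + 2) mod 3 = 0" "((1::nat) + 1) mod 3 = 2" by simp_all
  have n1: "\<nu> 1 = l 0 * l 1 + l 1 * l 0 + l 2 * l 2" unfolding \<nu>_def by (simp only: a1')
  have a1: "((2::nat) + 3) mod 3 = 2" "((2::nat) + 2) mod 3 = 1" "((2::nat) + 1) mod 3 = 0" by simp_all
  have n2: "\<nu> 2 = l 0 * l 2 + l 1 * l 1 + l 2 * l 0" unfolding \<nu>_def by (simp only: a1)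
  show "(\<beta> \<otimes>\<^bsub>group_algebra (T_group m t)\<^esub> \<beta> \<otimes>\<^bsub>group_algebra (T_group m t)\<^esub> \<beta>) g = 0"
  proof (cases "g \<in> carrier (T_group m t)")
    case True
    have c: "(\<beta> \<otimes>\<^bsub>group_algebra (T_group m t)\<^esub> \<beta> \<otimes>\<^bsub>group_algebra (T_group m t)\<^esub> \<beta>) g
       = \<nu> 0 * l ((snd g + 3) mod 3) + \<nu> 1 * l ((snd g + 2) mod 3) + \<nu> 2 * l ((snd g + 1) mod 3)"
      using conv_snd[OF m0 t3, of "\<beta> \<otimes>\<^bsub>group_algebra (T_group m t)\<^esub> \<beta>" \<nu> \<beta> l g] bb lh True m1 by simp
    have "snd g < 3" using True by (auto simp: T_carrier)
    then have "snd g = 0 \<or> snd g = 1 \<or> snd g = 2" by linarith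
    then show ?thesis
    proof (elim disjE)
      assume sg: "snd g = 0"
      have "(\<beta> \<otimes>\<^bsub>group_algebra (T_group m t)\<^esub> \<beta> \<otimes>\<^bsub>group_algebra (T_group m t)\<^esub> \<beta>) g
         = \<nu> 0 * l 0 + \<nu> 1 * l 2 + \<nu> 2 * l 1" using c by (simp only: sg a0)
      also have "\<dots> = 0" unfolding n0 n1 n2 poly0 l0 three by simp
      finally show ?thesis .
    next
      assume sg: "snd g = 1"
      have "(\<beta> \<otimes>\<^bsub>group_algebra (T_group m t)\<^esub> \<beta> \<otimes>\<^bsub>group_algebra (T_group m t)\<^esub> \<beta>) g
         = \<nu> 0 * l 1 + \<nu> 1 * l 0 + \<nu> 2 * l 2" using c by (simp only: sg a1')
      also have "\<dots> = 0" unfolding n0 n1 n2 poly1 three by simp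
      finally show ?thesis .
    next
      assume sg: "snd g = 2"
      have "(\<beta> \<otimes>\<^bsub>group_algebra (T_group m t)\<^esub> \<beta> \<otimes>\<^bsub>group_algebra (T_group m t)\<^esub> \<beta>) g
         = \<nu> 0 * l 2 + \<nu> 1 * l 1 + \<nu> 2 * l 0" using c by (simp only: sg a1)
      also have "\<dots> = 0" unfolding n0 n1 n2 poly2 three by simp
      finally show ?thesis .
    qed
  next
    case False then show ?thesis by (simp add: ga_mult_out)
  qed
qed



theorem proposition3p4:
  fixes k :: nat and m :: nat and t :: int
    and F :: "'f::field itself"
  assumes "finite (UNIV :: 'f set)"
    and "CHAR('f) = 3"
    and "m = 3 * k + 1"
    and "[t ^ 3 = 1] (mod int m)"
    and "gcd (int m) (t - 1) = 1"
  defines "FG \<equiv> (group_algebra (T_group m t) :: ((nat \<times> nat) \<Rightarrow> 'f) ring)"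
    and "s \<equiv> (\<lambda>g. if g \<in> carrier (T_group m t) \<and> (\<exists>n::nat. group.ord (T_group m t) g = 3 ^ n) then (1::'f) else 0)"
  shows "{\<alpha> \<in> carrier FG. \<alpha> \<otimes>\<^bsub>FG\<^esub> s = \<zero>\<^bsub>FG\<^esub> \<and> s \<otimes>\<^bsub>FG\<^esub> \<alpha> = \<zero>\<^bsub>FG\<^esub>}
           \<subseteq> jacobson_radical FG"
proof -
  note mk = assms(3) and t3 = assms(4) and gc = assms(5)
  have m0: "0 < m" using mk by simp
  have three: "(3::'f) = 0" using of_nat_CHAR[where 'a='f] assms(2) by simp
  have m1: "of_nat m = (1::'f)" using three mk by simp
  interpret G: group "T_group m t" using T_group_is_group[OF m0 t3] .
  have fin: "finite (carrier (T_group m t))" by (simp add: T_carrier)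
  have R: "ring FG" unfolding FG_def by (rule G.ga_ring[OF fin])
  interpret R: ring FG by (rule R)
  define sT where "sT = (\<lambda>g. if g \<in> carrier (T_group m t) \<and> (snd g \<noteq> 0 \<or> g = (0, 0)) then (1::'f) else 0)"
  have s_eq: "s = sT"
  proof
    fix g show "s g = sT g"
      using T_ord[OF mk t3 gc, of g] by (cases "g \<in> carrier (T_group m t)") (simp_all add: s_def sT_def)
  qed
  have sC: "s \<in> carrier FG" by (simp add: FG_def ga_carrier s_def)
  define I where "I = {\<beta> \<in> carrier FG. \<beta> \<otimes>\<^bsub>FG\<^esub> s = \<zero>\<^bsub>FG\<^esub>}"
  have "I \<subseteq> jacobson_radical FG"
  proof (rule ring.nil_in_jacobson[OF R])
    show "I \<subseteq> carrier FG" by (auto simp: I_def)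
  next
    fix r a assume r: "r \<in> carrier FG" and a: "a \<in> I"
    then have aC: "a \<in> carrier FG" and az: "a \<otimes>\<^bsub>FG\<^esub> s = \<zero>\<^bsub>FG\<^esub>" by (auto simp: I_def)
    have "(r \<otimes>\<^bsub>FG\<^esub> a) \<otimes>\<^bsub>FG\<^esub> s = r \<otimes>\<^bsub>FG\<^esub> (a \<otimes>\<^bsub>FG\<^esub> s)"
      using R.m_assoc[OF r aC sC] .
    also have "\<dots> = \<zero>\<^bsub>FG\<^esub>" using az R.r_null[OF r] by simp
    finally show "r \<otimes>\<^bsub>FG\<^esub> a \<in> I" using R.m_closed[OF r aC] by (simp add: I_def)
  next
    fix b assume b: "b \<in> I"
    then have bz: "b \<otimes>\<^bsub>group_algebra (T_group m t)\<^esub> sT = (\<lambda>g. 0)"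
      by (simp add: I_def FG_def s_eq ga_zero)
    obtain l where lh: "\<forall>h\<in>carrier (T_group m t). b h = l (snd h)" and l0: "l 0 + l 1 + l 2 = 0"
      using ann_form[OF m0 t3 m1 bz[unfolded sT_def]] by blast
    show "b \<otimes>\<^bsub>FG\<^esub> b \<otimes>\<^bsub>FG\<^esub> b = \<zero>\<^bsub>FG\<^esub>"
      using cube_zero[OF m0 t3 m1 three lh l0] by (simp add: FG_def ga_zero)
  qed
  moreover have "{\<alpha> \<in> carrier FG. \<alpha> \<otimes>\<^bsub>FG\<^esub> s = \<zero>\<^bsub>FG\<^esub> \<and> s \<otimes>\<^bsub>FG\<^esub> \<alpha> = \<zero>\<^bsub>FG\<^esub>} \<subseteq> I"
    by (auto simp: I_def)
  ultimately show ?thesis by blast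
qed


end
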